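(* Let $\mathcal K\subset S^D_+$ be compact and $\mathcal P^\uparrow(\mathcal K)=\mathcal P^\uparrow(S^D_+)\cap\mathcal P(\mathcal K)$. Then $\mathcal P^\uparrow(\mathcal K)$ is a closed subset of $(\mathcal P(\mathcal K),d)$, in particular it is compact for the topology induced by $d$. Moreover, for every $\mu\in\mathcal P(\mathcal K)$, the support of $\mu$ is totally ordered if and only if $\mu\in\mathcal P^\uparrow(\mathcal K)$.
   Context: $S^D_+$: positive semidefinite symmetric $D\times D$ matrices with Frobenius norm $|\cdot|$; for $x,x'\in S^D$, $x\le x'$ means $x'-x\in S^D_+$; a set $S\subset S^D_+$ is totally ordered if for all $x,x'\in S$, $x\le x'$ or $x'\le x$. $\mathcal P(\mathcal K)$: Borel probability measures on $\mathcal K$ with $1$-Wasserstein distance $d(\mu,\nu)=\inf_\pi\int|x-y|\,\mathrm d\pi(x,y)$. A probability measure on $S^D_+$ is monotone if it is the law of $\mathsf q(U)$ with $U$ uniform on $[0,1)$ and $\mathsf q:[0,1)\to S^D_+$ nondecreasing ($\mathsf q(v)-\mathsf q(u)\in S^D_+$ for $u\le v$); $\mathcal P^\uparrow(S^D_+)$ is the set of monotone probability measures. *)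

theory Defs
  imports "HOL-Probability.Probability"
begin

text \<open>Symmetric D x D real matrices are elements of type real^'n^'n (D = CARD('n)).
  The norm on this type is the Frobenius norm, so dist x y = |x - y|.\<close>

definition psd :: "real^'n^'n \<Rightarrow> bool" where
  "psd A \<longleftrightarrow> transpose A = A \<and> (\<forall>v. 0 \<le> v \<bullet> (A *v v))"

definition psd_set :: "(real^'n^'n) set" where
  "psd_set = {A. psd A}"

definition loewner_le :: "real^'n^'n \<Rightarrow> real^'n^'n \<Rightarrow> bool" where
  "loewner_le x x' \<longleftrightarrow> psd (x' - x)"

definition totally_ordered :: "(real^'n^'n) set \<Rightarrow> bool" where
  "totally_ordered S \<longleftrightarrow> (\<forall>x\<in>S. \<forall>x'\<in>S. loewner_le x x' \<or> loewner_le x' x)"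

text \<open>Borel probability measures on K (represented as Borel probability measures on the
  ambient matrix space concentrated on K).\<close>
definition prob_on :: "(real^'n^'n) set \<Rightarrow> (real^'n^'n) measure set" where
  "prob_on K = {\<mu>. prob_space \<mu> \<and> sets \<mu> = sets borel \<and> emeasure \<mu> K = 1}"

definition couplings :: "'a::topological_space measure \<Rightarrow> 'a measure \<Rightarrow> ('a \<times> 'a) measure set" where
  "couplings \<mu> \<nu> = {\<pi>. prob_space \<pi> \<and> sets \<pi> = sets (borel \<Otimes>\<^sub>M borel)
      \<and> distr \<pi> borel fst = \<mu> \<and> distr \<pi> borel snd = \<nu>}"

definition wasserstein1 :: "'a::metric_space measure \<Rightarrow> 'a measure \<Rightarrow> real" where
  "wasserstein1 \<mu> \<nu> = Inf ((\<lambda>\<pi>. integral\<^sup>L \<pi> (\<lambda>(x,y). dist x y)) ` couplings \<mu> \<nu>)"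

definition unif01 :: "real measure" where
  "unif01 = uniform_measure lborel {0..<1}"

definition monotone_measures :: "(real^'n^'n) measure set" where
  "monotone_measures = {\<mu>. \<exists>q :: real \<Rightarrow> real^'n^'n.
      q \<in> borel_measurable lborel \<and>
      (\<forall>u\<in>{0..<1}. q u \<in> psd_set) \<and>
      (\<forall>u\<in>{0..<1}. \<forall>v\<in>{0..<1}. u \<le> v \<longrightarrow> loewner_le (q u) (q v)) \<and>
      \<mu> = distr unif01 borel q}"

definition mono_prob_on :: "(real^'n^'n) set \<Rightarrow> (real^'n^'n) measure set" where
  "mono_prob_on K = monotone_measures \<inter> prob_on K"

definition msupport :: "'a::metric_space measure \<Rightarrow> 'a set" where
  "msupport \<mu> = {x. \<forall>e>0. 0 < emeasure \<mu> (ball x e)}"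

end

theory Submission
  imports Defs "HOL-Library.Diagonal_Subsequence"
begin


definition mtr :: "real^'n^'n \<Rightarrow> real" where
  "mtr A = (\<Sum>i\<in>UNIV. A$i$i)"

lemma mtr_diff: "mtr (A - B) = mtr A - mtr B"
  by (simp add: mtr_def sum_subtractf)

lemma mtr_add: "mtr (A + B) = mtr A + mtr B"
  by (simp add: mtr_def sum.distrib)

lemma quad_expand: "v \<bullet> (A *v v) = (\<Sum>i\<in>UNIV. \<Sum>j\<in>UNIV. v$i * A$i$j * v$j)"
  by (simp add: inner_vec_def matrix_vector_mult_def sum_distrib_left mult.assoc)

lemma axis_mult_right: "x * axis j (d::real) $ k = (if k = j then x * d else 0)"
  by (simp add: axis_def)

lemma bil_axis: "axis i (c::real) \<bullet> (A *v axis j d) = c * d * A$i$j"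
  by (simp add: inner_axis' matrix_vector_mult_def axis_mult_right sum.delta)

lemma quad_axis: "axis i (1::real) \<bullet> (A *v axis i 1) = A$i$i"
  by (simp add: bil_axis)

lemma psd_diag: "psd A \<Longrightarrow> 0 \<le> A$i$i"
  unfolding psd_def using quad_axis by metis

lemma psd_sym: "psd A \<Longrightarrow> A$i$j = A$j$i"
  unfolding psd_def transpose_def by (metis vec_lambda_beta)

lemma quad_two:
  fixes A :: "real^'n^'n"
  shows "(axis i 1 + axis j c) \<bullet> (A *v (axis i 1 + axis j c)) = A$i$i + c * A$i$j + c * A$j$i + c*c*A$j$j"
  by (simp add: matrix_vector_right_distrib inner_add_left inner_add_right bil_axis)

lemma psd_offdiag: 
  assumes "psd A" shows "\<bar>A$i$j\<bar> \<le> (A$i$i + A$j$j)/2"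
proof (cases "i = j")
  case True then show ?thesis using psd_diag[OF assms, where i=i] by simp
next
  case False
  have s: "A$j$i = A$i$j" using psd_sym[OF assms] by simp
  have "0 \<le> (axis i 1 + axis j 1) \<bullet> (A *v (axis i 1 + axis j 1))" using assms unfolding psd_def by blast
  then have 1: "0 \<le> A$i$i + 2 * A$i$j + A$j$j" using quad_two[where i=i and j=j and A=A and c=1] s by simp
  have "0 \<le> (axis i 1 + axis j (-1)) \<bullet> (A *v (axis i 1 + axis j (-1)))" using assms unfolding psd_def by blast
  then have 2: "0 \<le> A$i$i - 2 * A$i$j + A$j$j" using quad_two[where i=i and j=j and A=A and c="-1"] s by simp
  show ?thesis using 1 2 by (simp add: abs_le_iff)
qed

lemma psd_mtr_nonneg: "psd A \<Longrightarrow> 0 \<le> mtr A"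
  unfolding mtr_def by (simp add: psd_diag sum_nonneg)

lemma psd_norm_le: 
  fixes A :: "real^'n^'n"
  assumes "psd A" shows "norm A \<le> real CARD('n) * mtr A"
proof -
  have "norm A \<le> (\<Sum>i\<in>UNIV. norm (A$i))" unfolding norm_vec_def by (rule L2_set_le_sum) simp
  also have "\<dots> \<le> (\<Sum>i\<in>UNIV. \<Sum>j\<in>UNIV. (A$i$i + A$j$j)/2)"
  proof (rule sum_mono)
    fix i
    have "norm (A$i) \<le> (\<Sum>j\<in>UNIV. \<bar>A$i$j\<bar>)" by (rule norm_le_l1_cart)
    also have "\<dots> \<le> (\<Sum>j\<in>UNIV. (A$i$i + A$j$j)/2)" by (rule sum_mono) (rule psd_offdiag[OF assms])
    finally show "norm (A$i) \<le> (\<Sum>j\<in>UNIV. (A$i$i + A$j$j)/2)" .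
  qed
  also have "\<dots> = real CARD('n) * mtr A"
    by (simp add: mtr_def sum.distrib sum_divide_distrib[symmetric] sum_distrib_left[symmetric]
         sum.swap[of "\<lambda>i j. A$j$j"] algebra_simps)
  finally show ?thesis .
qed

lemma psd_mtr_zero: "psd A \<Longrightarrow> mtr A = 0 \<Longrightarrow> A = 0"
  using psd_norm_le[of A] psd_mtr_nonneg[of A] by (metis mult_zero_right norm_le_zero_iff)

lemma psd_zero: "psd 0"
  by (simp add: psd_def transpose_def vec_eq_iff)

lemma psd_add: "psd A \<Longrightarrow> psd B \<Longrightarrow> psd (A + B)"
  unfolding psd_def by (simp add: transpose_def vec_eq_iff inner_add_right add_nonneg_nonneg matrix_vector_mult_add_rdistrib)

lemma loewner_refl: "loewner_le x x"
  by (simp add: loewner_le_def psd_zero)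

lemma loewner_trans: "loewner_le x y \<Longrightarrow> loewner_le y z \<Longrightarrow> loewner_le x z"
  unfolding loewner_le_def using psd_add[of "y - x" "z - y"] by (simp add: algebra_simps)

lemma loewner_mtr: "loewner_le x y \<Longrightarrow> mtr x \<le> mtr y"
  unfolding loewner_le_def using psd_mtr_nonneg[of "y - x"] by (simp add: mtr_diff)

lemma loewner_antisym_mtr: "loewner_le x y \<Longrightarrow> mtr x = mtr y \<Longrightarrow> x = y"
  unfolding loewner_le_def using psd_mtr_zero[of "y - x"] by (simp add: mtr_diff)

lemma loewner_norm: 
  fixes x :: "real^'n^'n"
  shows "loewner_le x y \<Longrightarrow> norm (y - x) \<le> real CARD('n) * (mtr y - mtr x)"
  unfolding loewner_le_def using psd_norm_le[of "y - x"] by (simp add: mtr_diff)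

lemma continuous_mtr: "continuous_on S (mtr :: real^'n^'n \<Rightarrow> real)"
  unfolding mtr_def by (intro continuous_intros)

lemma continuous_quad: "continuous_on S (\<lambda>A::real^'n^'n. v \<bullet> (A *v v))"
  unfolding matrix_vector_mult_def inner_vec_def by (intro continuous_intros)

lemma closed_psd: "closed {A::real^'n^'n. psd A}"
proof -
  have "{A::real^'n^'n. psd A} = (\<Inter>i. \<Inter>j. {A. A$i$j = A$j$i}) \<inter> (\<Inter>v. {A. 0 \<le> v \<bullet> (A *v v)})"
    unfolding psd_def transpose_def by (auto simp: vec_eq_iff)
  also have "closed \<dots>"
    by (intro closed_Int closed_INT ballI closed_Collect_eq closed_Collect_le continuous_quad
        continuous_intros)
  finally show ?thesis .
qed

lemma closed_loewner: "closed {p::(real^'n^'n) \<times> (real^'n^'n). loewner_le (fst p) (snd p)}"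
proof -
  have "{p::(real^'n^'n) \<times> (real^'n^'n). loewner_le (fst p) (snd p)} = (\<lambda>p. snd p - fst p) -` {A. psd A}"
    by (auto simp: loewner_le_def)
  also have "closed \<dots>"
    by (intro continuous_closed_vimage closed_psd continuous_intros)
  finally show ?thesis .
qed

lemma closed_comparable: "closed {p::(real^'n^'n) \<times> (real^'n^'n). loewner_le (fst p) (snd p) \<or> loewner_le (snd p) (fst p)}"
proof -
  have "{p::(real^'n^'n) \<times> (real^'n^'n). loewner_le (fst p) (snd p) \<or> loewner_le (snd p) (fst p)}
    = {p. loewner_le (fst p) (snd p)} \<union> (\<lambda>p. (snd p, fst p)) -` {p. loewner_le (fst p) (snd p)}"
    by auto
  also have "closed \<dots>"
    by (intro closed_Un closed_loewner continuous_closed_vimage continuous_intros)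
  finally show ?thesis .
qed

lemma comparable_approx:
  fixes x y :: "real^'n^'n"
  assumes "\<And>e. e > 0 \<Longrightarrow> \<exists>a b. dist a x < e \<and> dist b y < e \<and> (loewner_le a b \<or> loewner_le b a)"
  shows "loewner_le x y \<or> loewner_le y x"
proof -
  let ?R = "{p::(real^'n^'n) \<times> (real^'n^'n). loewner_le (fst p) (snd p) \<or> loewner_le (snd p) (fst p)}"
  have "(x, y) \<in> ?R"
  proof (rule iffD1[OF closed_approachable[OF closed_comparable]], intro allI impI)
    fix e :: real assume "e > 0"
    then obtain a b where ab: "dist a x < e/2" "dist b y < e/2" "loewner_le a b \<or> loewner_le b a"
      using assms[of "e/2"] by auto
    have "dist (a, b) (x, y) \<le> dist a x + dist b y"
      by (simp add: dist_Pair_Pair sqrt_sum_squares_le_sum_abs[THEN order_trans] )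
    then show "\<exists>p\<in>?R. dist p (x, y) < e" using ab by (intro bexI[of _ "(a,b)"]) auto
  qed
  then show ?thesis by simp
qed

lemma psd_set_closed: "closed (psd_set :: (real^'n^'n) set)"
  using closed_psd unfolding psd_set_def .


lemma unif01_prob: "prob_space unif01"
  unfolding unif01_def by (rule prob_space_uniform_measure) auto

lemma sets_unif01[simp]: "sets unif01 = sets borel"
  unfolding unif01_def by simp

lemma space_unif01[simp]: "space unif01 = UNIV"
  unfolding unif01_def by simp

lemma measurable_unif01[measurable_cong]: "measurable unif01 M = measurable borel M"
  by (rule measurable_cong_sets) auto

lemma emeasure_unif01: "A \<in> sets borel \<Longrightarrow> emeasure unif01 A = emeasure lborel (A \<inter> {0..<1})"
  unfolding unif01_def by (subst emeasure_uniform_measure) (auto simp: Int_commute divide_ennreal_def)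

lemma distr_unif01_pos:
  fixes q :: "real \<Rightarrow> 'a::topological_space"
  assumes q: "q \<in> borel_measurable borel" and A: "A \<in> sets borel"
    and pos: "0 < emeasure (distr unif01 borel q) A"
  shows "\<exists>u\<in>{0..<1}. q u \<in> A"
proof (rule ccontr)
  assume "\<not> ?thesis"
  then have e: "q -` A \<inter> {0..<1} = {}" by auto
  have "emeasure (distr unif01 borel q) A = emeasure unif01 (q -` A)"
    using q A by (subst emeasure_distr) (auto simp: measurable_unif01)
  also have "\<dots> = 0" using e measurable_sets_borel[OF q A] by (subst emeasure_unif01) auto
  finally show False using pos by simp
qed

lemma msupport_null_ball:
  fixes \<mu> :: "'a::metric_space measure"
  assumes S: "sets \<mu> = sets borel" and "x \<notin> msupport \<mu>"
  shows "\<exists>e>0. ball x e \<inter> msupport \<mu> = {} \<and> emeasure \<mu> (ball x e) = 0"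
proof -
  obtain e where e: "e > 0" "emeasure \<mu> (ball x e) = 0" using assms(2) by (auto simp: msupport_def)
  have "ball x e \<inter> msupport \<mu> = {}"
  proof (rule ccontr)
    assume "ball x e \<inter> msupport \<mu> \<noteq> {}"
    then obtain y where y: "y \<in> ball x e" "y \<in> msupport \<mu>" by auto
    then obtain d where d: "d > 0" "ball y d \<subseteq> ball x e" using openE[OF open_ball y(1)] by blast
    then have "emeasure \<mu> (ball y d) \<le> emeasure \<mu> (ball x e)"
      by (intro emeasure_mono) (auto simp: S)
    then have "emeasure \<mu> (ball y d) = 0" using e by simp
    then show False using y(2) d(1) by (auto simp: msupport_def)
  qed
  then show ?thesis using e by auto
qed

lemma msupport_closed:
  fixes \<mu> :: "'a::metric_space measure"
  assumes S: "sets \<mu> = sets borel"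
  shows "closed (msupport \<mu>)"
proof -
  have "open (- msupport \<mu>)"
    unfolding open_contains_ball
  proof
    fix x assume "x \<in> - msupport \<mu>"
    then obtain e where "e > 0" "ball x e \<inter> msupport \<mu> = {}" using msupport_null_ball[OF S] by blast
    then show "\<exists>e>0. ball x e \<subseteq> - msupport \<mu>" by (intro exI[of _ e]) auto
  qed
  then show ?thesis by (simp add: closed_def)
qed

lemma msupport_compl_null:
  fixes \<mu> :: "'a::{metric_space, second_countable_topology} measure"
  assumes S: "sets \<mu> = sets borel"
  shows "emeasure \<mu> (- msupport \<mu>) = 0"
proof -
  define F where "F = {ball x e | x e. e > 0 \<and> ball x e \<inter> msupport \<mu> = {} \<and> emeasure \<mu> (ball x e) = 0}"
  have "\<And>T. T \<in> F \<Longrightarrow> open T" by (auto simp: F_def)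
  then obtain F' where F': "F' \<subseteq> F" "countable F'" "\<Union>F' = \<Union>F" using Lindelof by metis
  have eq: "\<Union>F = - msupport \<mu>"
  proof
    show "\<Union>F \<subseteq> - msupport \<mu>" by (auto simp: F_def)
    show "- msupport \<mu> \<subseteq> \<Union>F"
    proof
      fix x assume "x \<in> - msupport \<mu>"
      then obtain e where "e>0" "ball x e \<inter> msupport \<mu> = {} \<and> emeasure \<mu> (ball x e) = 0"
        using msupport_null_ball[OF S] by blast
      then show "x \<in> \<Union>F" unfolding F_def using centre_in_ball by blast
    qed
  qed
  have "(\<Union>T\<in>F'. T) \<in> null_sets \<mu>"
  proof (rule null_sets_UN')
    show "countable F'" by fact
    fix T assume "T \<in> F'"
    then have "T \<in> F" using F' by auto
    then show "T \<in> null_sets \<mu>" by (auto simp: F_def S null_sets_def)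
  qed
  then show ?thesis using F'(3) eq by auto
qed

lemma msupport_subset:
  fixes \<mu> :: "'a::metric_space measure"
  assumes S: "sets \<mu> = sets borel" and P: "prob_space \<mu>" and K: "closed K" "emeasure \<mu> K = 1"
  shows "msupport \<mu> \<subseteq> K"
proof
  fix x assume x: "x \<in> msupport \<mu>"
  show "x \<in> K"
  proof (rule ccontr)
    assume "x \<notin> K"
    then obtain e where e: "e > 0" "ball x e \<subseteq> - K"
      using K(1) by (metis open_Compl open_contains_ball ComplI closed_def)
    interpret prob_space \<mu> by fact
    have Ks: "K \<in> sets \<mu>" using K(1) S by auto
    have "emeasure \<mu> (- K) = emeasure \<mu> (space \<mu> - K)" using S by (metis Compl_eq_Diff_UNIV space_borel sets_eq_imp_space_eq)
    also have "\<dots> = 0" using emeasure_compl[OF Ks] K(2) emeasure_space_1 by simp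
    finally have "emeasure \<mu> (ball x e) = 0"
      using emeasure_mono[OF e(2)] S K(1) by (metis le_zero_eq borel_open open_Compl closed_def)
    then show False using x e(1) by (auto simp: msupport_def)
  qed
qed


lemma quad_diff:
  fixes A B :: "real^'n^'n"
  shows "v \<bullet> ((B - A) *v v) = v \<bullet> (B *v v) - v \<bullet> (A *v v)"
  by (simp add: matrix_vector_mult_diff_rdistrib inner_diff_right)

lemma loewner_quad:
  fixes A B :: "real^'n^'n"
  assumes "loewner_le A B" shows "v \<bullet> (A *v v) \<le> v \<bullet> (B *v v)"
proof -
  have "0 \<le> v \<bullet> ((B - A) *v v)" using assms by (auto simp: loewner_le_def psd_def)
  then show ?thesis by (simp add: quad_diff)
qed

lemma entry_quad:
  fixes A :: "real^'n^'n"
  assumes "transpose A = A"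
  shows "A$i$j = ((axis i 1 + axis j 1) \<bullet> (A *v (axis i 1 + axis j 1))
     - axis i 1 \<bullet> (A *v axis i 1) - axis j 1 \<bullet> (A *v axis j 1)) / 2"
proof (cases "i = j")
  case True
  have "axis i (1::real) + axis i 1 = axis i 2" by (simp add: axis_def vec_eq_iff)
  then show ?thesis using True by (simp add: matrix_vector_right_distrib inner_add_left inner_add_right bil_axis)
next
  case False
  have "A$j$i = A$i$j" using assms unfolding transpose_def by (metis vec_lambda_beta)
  then show ?thesis using quad_two[where i=i and j=j and A=A and c=1] by (simp add: bil_axis)
qed

lemma loewner_mono_measurable:
  fixes f :: "real \<Rightarrow> real^'n^'n"
  assumes sym: "\<And>s. transpose (f s) = f s"
    and mono: "\<And>s s'. s \<le> s' \<Longrightarrow> loewner_le (f s) (f s')"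
  shows "f \<in> borel_measurable borel"
proof -
  have q: "(\<lambda>s. v \<bullet> (f s *v v)) \<in> borel_measurable borel" for v
    by (rule borel_measurable_mono) (auto simp: mono_def intro!: loewner_quad mono)
  have e: "(\<lambda>s. f s $ i $ j) \<in> borel_measurable borel" for i j
    by (subst entry_quad[OF sym]) (intro borel_measurable_divide borel_measurable_diff q borel_measurable_const)
  show ?thesis
  proof (subst borel_measurable_euclidean_space, intro ballI)
    fix b :: "real^'n^'n" assume "b \<in> Basis"
    then obtain i u where b: "b = axis i u" "u \<in> Basis" by (auto simp: Basis_vec_def)
    then obtain j where u: "u = axis j 1" by (auto simp: Basis_vec_def)
    have "(\<lambda>x. f x \<bullet> b) = (\<lambda>x. f x $ i $ j)" by (simp add: b u inner_axis)
    then show "(\<lambda>x. f x \<bullet> b) \<in> borel_measurable borel" using e by simp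
  qed
qed

lemma mono_support_total:
  fixes q :: "real \<Rightarrow> real^'n^'n"
  assumes q: "q \<in> borel_measurable borel"
    and mono: "\<forall>u\<in>{0..<1}. \<forall>v\<in>{0..<1}. u \<le> v \<longrightarrow> loewner_le (q u) (q v)"
  shows "totally_ordered (msupport (distr unif01 borel q))"
  unfolding totally_ordered_def
proof (intro ballI comparable_approx)
  fix x y :: "real^'n^'n" and e :: real
  assume x: "x \<in> msupport (distr unif01 borel q)" and y: "y \<in> msupport (distr unif01 borel q)" and e: "e > 0"
  obtain u where u: "u \<in> {0..<1}" "q u \<in> ball x e"
    using distr_unif01_pos[OF q, of "ball x e"] x e by (auto simp: msupport_def)
  obtain v where v: "v \<in> {0..<1}" "q v \<in> ball y e"
    using distr_unif01_pos[OF q, of "ball y e"] y e by (auto simp: msupport_def)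
  have "loewner_le (q u) (q v) \<or> loewner_le (q v) (q u)"
    using mono u(1) v(1) by (meson linear)
  then show "\<exists>a b. dist a x < e \<and> dist b y < e \<and> (loewner_le a b \<or> loewner_le b a)"
    using u(2) v(2) by (intro exI[of _ "q u"] exI[of _ "q v"]) (auto simp: dist_commute)
qed


lemma mtr_measurable[measurable]: "(mtr :: real^'n^'n \<Rightarrow> real) \<in> borel_measurable borel"
  by (rule borel_measurable_continuous_onI) (rule continuous_mtr)

lemma total_support_mono:
  fixes K :: "(real^'n^'n) set" and \<mu> :: "(real^'n^'n) measure"
  assumes K: "compact K" "K \<subseteq> psd_set" and \<mu>: "\<mu> \<in> prob_on K" and tot: "totally_ordered (msupport \<mu>)"
  shows "\<mu> \<in> monotone_measures"
proof -
  define S where "S = msupport \<mu>"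
  have P: "prob_space \<mu>" and Ss: "sets \<mu> = sets borel" and K1: "emeasure \<mu> K = 1"
    using \<mu> by (auto simp: prob_on_def)
  interpret prob_space \<mu> by fact
  have sp: "space \<mu> = UNIV" using Ss by (metis sets_eq_imp_space_eq space_borel)
  have Scl: "closed S" unfolding S_def by (rule msupport_closed[OF Ss])
  have SK: "S \<subseteq> K" unfolding S_def
    by (rule msupport_subset[OF Ss P compact_imp_closed[OF K(1)] K1])
  have Scp: "compact S" using Scl SK K(1) by (metis compact_Int_closed inf.absorb_iff2)
  have null: "emeasure \<mu> (- S) = 0" unfolding S_def by (rule msupport_compl_null[OF Ss])
  have nullS: "- S \<in> null_sets \<mu>" using null Scl Ss by (auto simp: null_sets_def)
  have AES: "AE x in \<mu>. x \<in> S" by (rule AE_I'[OF nullS]) auto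
  have Sne: "S \<noteq> {}"
  proof
    assume "S = {}"
    then have "emeasure \<mu> UNIV = 0" using null by simp
    then show False using emeasure_space_1 sp by simp
  qed
  have comp: "\<And>x y. x \<in> S \<Longrightarrow> y \<in> S \<Longrightarrow> loewner_le x y \<or> loewner_le y x"
    using tot unfolding S_def totally_ordered_def by blast
  have inj: "inj_on mtr S"
  proof (rule inj_onI)
    fix x y assume "x \<in> S" "y \<in> S" "mtr x = mtr y"
    then show "x = y" using comp[of x y] loewner_antisym_mtr by metis
  qed
  define T where "T = mtr ` S"
  have Tcp: "compact T" unfolding T_def by (rule compact_continuous_image[OF continuous_mtr Scp])
  have Tne: "T \<noteq> {}" using Sne by (simp add: T_def)
  define tmin where "tmin = Inf T"
  define tmax where "tmax = Sup T"
  have tmin: "tmin \<in> T" "\<And>t. t \<in> T \<Longrightarrow> tmin \<le> t"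
    unfolding tmin_def using Tcp Tne
    by (auto intro!: closed_contains_Inf cInf_lower compact_imp_closed compact_imp_bounded bounded_imp_bdd_below)
  have tmax: "tmax \<in> T" "\<And>t. t \<in> T \<Longrightarrow> t \<le> tmax"
    unfolding tmax_def using Tcp Tne
    by (auto intro!: closed_contains_Sup cSup_upper compact_imp_closed compact_imp_bounded bounded_imp_bdd_above)
  define \<rho> where "\<rho> s = (if s < tmin then tmin else Sup {t\<in>T. t \<le> s})" for s
  have Teq: "{t\<in>T. t \<le> s} = T \<inter> {..s}" for s by auto
  have bddT: "bdd_above {t\<in>T. t \<le> s}" for s
    unfolding Teq by (rule bdd_above_Int2) simp
  have clT: "closed {t\<in>T. t \<le> s}" for s
    unfolding Teq using Tcp by (intro closed_Int compact_imp_closed closed_atMost)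
  have rhoT: "\<rho> s \<in> T" for s
  proof (cases "s < tmin")
    case False
    then have "{t\<in>T. t \<le> s} \<noteq> {}" using tmin by auto
    then show ?thesis using False closed_contains_Sup[OF _ bddT clT] by (auto simp: \<rho>_def)
  qed (auto simp: \<rho>_def tmin)
  have rho_id: "\<rho> t = t" if "t \<in> T" for t
  proof -
    have "\<not> t < tmin" using tmin that by force
    moreover have "Sup {t'\<in>T. t' \<le> t} = t"
      using that by (intro cSup_eq_maximum) auto
    ultimately show ?thesis by (simp add: \<rho>_def)
  qed
  have rho_mono: "\<rho> s \<le> \<rho> s'" if "s \<le> s'" for s s'
  proof (cases "s < tmin")
    case True
    then show ?thesis using tmin(2)[OF rhoT[of s']] by (simp add: \<rho>_def)
  next
    case False
    then have ne: "{t\<in>T. t \<le> s} \<noteq> {}" using tmin by auto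
    have "\<not> s' < tmin" using False that by auto
    then show ?thesis using False that ne
      by (auto simp: \<rho>_def intro!: cSup_subset_mono bddT)
  qed
  define g where "g = inv_into S mtr"
  have gS: "g t \<in> S" and mtr_g: "mtr (g t) = t" if "t \<in> T" for t
    using that unfolding g_def T_def by (auto intro: inv_into_into f_inv_into_f)
  have g_mtr: "g (mtr x) = x" if "x \<in> S" for x
    unfolding g_def using inj that by (rule inv_into_f_f)
  have g_mono: "loewner_le (g t) (g t')" if "t \<in> T" "t' \<in> T" "t \<le> t'" for t t'
  proof -
    from comp[OF gS[OF that(1)] gS[OF that(2)]]
    show ?thesis
    proof
      assume "loewner_le (g t') (g t)"
      then have "t' \<le> t" using loewner_mtr mtr_g that by metis
      then have "t = t'" using that by simp
      then show ?thesis by (simp add: loewner_refl)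
    qed
  qed
  define gt where "gt s = g (\<rho> s)" for s
  have gtS: "gt s \<in> S" for s unfolding gt_def by (rule gS[OF rhoT])
  have gt_mono: "loewner_le (gt s) (gt s')" if "s \<le> s'" for s s'
    unfolding gt_def by (rule g_mono[OF rhoT rhoT rho_mono[OF that]])
  have gt_min: "loewner_le (g tmin) (gt s)" for s
    unfolding gt_def by (rule g_mono[OF tmin(1) rhoT tmin(2)[OF rhoT]])
  have gt_max: "loewner_le (gt s) (g tmax)" for s
    unfolding gt_def by (rule g_mono[OF rhoT tmax(1) tmax(2)[OF rhoT]])
  have Spsd: "x \<in> S \<Longrightarrow> psd x" for x using SK K(2) by (auto simp: psd_set_def)
  have Ssym: "x \<in> S \<Longrightarrow> transpose x = x" for x using Spsd by (auto simp: psd_def)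
  have gt_meas: "gt \<in> borel_measurable borel"
    by (rule loewner_mono_measurable[OF Ssym[OF gtS] gt_mono])
  have gt_mtr: "gt (mtr x) = x" if "x \<in> S" for x
    unfolding gt_def using rho_id[of "mtr x"] g_mtr[OF that] that by (simp add: T_def)

  define \<nu> where "\<nu> = distr \<mu> borel mtr"
  have mtr_m: "mtr \<in> measurable \<mu> borel"
    by (subst measurable_cong_sets[OF Ss refl]) (rule mtr_measurable)
  have rd: "real_distribution \<nu>"
    unfolding real_distribution_def real_distribution_axioms_def
  proof
    show "prob_space \<nu>" unfolding \<nu>_def by (rule prob_space_distr[OF mtr_m])
    show "sets \<nu> = sets borel" by (simp add: \<nu>_def)
  qed
  interpret N: cdf_distribution \<nu> using rd by (simp add: cdf_distribution_def)
  define I where "I u = Inf {x. u \<le> cdf \<nu> x}" for u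
  define R where "R = restrict_space lborel {0<..<1::real}"
  have RI: "distr R borel I = \<nu>" unfolding R_def I_def by (rule N.distr_I_eq_M)
  have I_meas: "I \<in> measurable R borel"
  proof -
    have eq: "measurable R borel = measurable (restrict_space borel {0<..<1::real}) borel"
      unfolding R_def by (rule measurable_cong_sets) (rule sets_restrict_space_cong, simp_all)
    have "(\<lambda>u. Inf {x. u \<le> cdf \<nu> x}) \<in> measurable (restrict_space borel {0<..<1::real}) borel"
      by (rule N.measurable_CI)
    then show ?thesis unfolding eq[symmetric] I_def .
  qed
  have I_mono: "I u \<le> I v" if "0 < u" "u \<le> v" "v < 1" for u v
    using N.mono_I that unfolding I_def mono_on_def by auto

  define q where "q u = (if u \<in> {0<..<1} then gt (I u) else if u \<le> 0 then g tmin else g tmax)" for u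
  have qS: "q u \<in> S" for u unfolding q_def using gtS gS tmin(1) tmax(1) by auto
  have q_mono: "loewner_le (q u) (q v)" if "u \<le> v" for u v
    using that gt_min gt_max gt_mono I_mono loewner_refl gS tmin(1) tmax(1)
    unfolding q_def by (auto intro: loewner_trans)
  have q_meas: "q \<in> borel_measurable borel"
    by (rule loewner_mono_measurable[OF Ssym[OF qS] q_mono])

  have "\<mu> = distr \<mu> borel (\<lambda>x. x)" using Ss by (simp add: distr_id2)
  also have "\<dots> = distr \<mu> borel (gt \<circ> mtr)"
  proof (rule distr_cong_AE)
    show "AE x in \<mu>. x = (gt \<circ> mtr) x" using AES by eventually_elim (simp add: gt_mtr)
    show "(\<lambda>x. x) \<in> measurable \<mu> borel" by (subst measurable_cong_sets[OF Ss refl]) simp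
    show "gt \<circ> mtr \<in> measurable \<mu> borel" by (rule measurable_comp[OF mtr_m gt_meas])
  qed simp_all
  also have "\<dots> = distr \<nu> borel gt"
    unfolding \<nu>_def by (rule distr_distr[OF gt_meas mtr_m, symmetric])
  also have "\<dots> = distr R borel (gt \<circ> I)"
    unfolding RI[symmetric] by (rule distr_distr[OF gt_meas I_meas])
  also have "\<dots> = distr unif01 borel q"
  proof (rule measure_eqI)
    show "sets (distr R borel (gt \<circ> I)) = sets (distr unif01 borel q)" by simp
    fix A assume "A \<in> sets (distr R borel (gt \<circ> I))"
    then have A: "A \<in> sets borel" by simp
    have hm: "gt \<circ> I \<in> measurable R borel" using gt_meas I_meas by simp
    have spR: "space R = {0<..<1}" by (simp add: R_def space_restrict_space)
    have X: "(gt \<circ> I) -` A \<inter> {0<..<1} \<in> sets lborel"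
    proof -
      have "(gt \<circ> I) -` A \<inter> space R \<in> sets R" using measurable_sets[OF hm] A by simp
      then show ?thesis unfolding R_def spR[unfolded R_def]
        by (subst (asm) sets_restrict_space_iff) auto
    qed
    have "emeasure (distr R borel (gt \<circ> I)) A = emeasure R ((gt \<circ> I) -` A \<inter> {0<..<1})"
      using hm A spR by (subst emeasure_distr) auto
    also have "\<dots> = emeasure lborel ((gt \<circ> I) -` A \<inter> {0<..<1})"
      unfolding R_def by (rule emeasure_restrict_space) auto
    also have "\<dots> = emeasure lborel (((gt \<circ> I) -` A \<inter> {0<..<1}) \<union> (q -` A \<inter> {0}))"
      by (rule emeasure_Un_null_set[symmetric, OF X]) (rule finite_imp_null_set_lborel, rule finite_subset[of _ "{0}"], auto)
    also have "((gt \<circ> I) -` A \<inter> {0<..<1}) \<union> (q -` A \<inter> {0}) = q -` A \<inter> {0..<1}"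
      by (auto simp: q_def)
    also have "emeasure lborel (q -` A \<inter> {0..<1}) = emeasure unif01 (q -` A)"
      using measurable_sets_borel[OF q_meas A] by (subst emeasure_unif01) auto
    also have "\<dots> = emeasure (distr unif01 borel q) A"
      using q_meas A by (subst emeasure_distr) (auto simp: measurable_unif01)
    finally show "emeasure (distr R borel (gt \<circ> I)) A = emeasure (distr unif01 borel q) A" .
  qed
  finally have eq: "\<mu> = distr unif01 borel q" .
  show ?thesis
    unfolding monotone_measures_def
    using q_meas qS SK K(2) q_mono eq by (auto simp: measurable_lborel1 intro!: exI[of _ q])
qed


lemma coupling_prod:
  fixes \<mu> \<nu> :: "'a::metric_space measure"
  assumes P: "prob_space \<mu>" "prob_space \<nu>" and S: "sets \<mu> = sets borel" "sets \<nu> = sets borel"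
  shows "\<mu> \<Otimes>\<^sub>M \<nu> \<in> couplings \<mu> \<nu>"
proof -
  interpret PP: pair_prob_space \<mu> \<nu>
    unfolding pair_prob_space_def pair_sigma_finite_def using P by (auto intro: prob_space_imp_sigma_finite)
  have sp: "space \<mu> = UNIV" "space \<nu> = UNIV" using S by (metis sets_eq_imp_space_eq space_borel)+
  have "distr (\<mu> \<Otimes>\<^sub>M \<nu>) borel fst = \<mu>"
  proof (rule measure_eqI)
    show "sets (distr (\<mu> \<Otimes>\<^sub>M \<nu>) borel fst) = sets \<mu>" using S by simp
    fix A assume "A \<in> sets (distr (\<mu> \<Otimes>\<^sub>M \<nu>) borel fst)"
    then have A: "A \<in> sets \<mu>" using S by simp
    have "emeasure (distr (\<mu> \<Otimes>\<^sub>M \<nu>) borel fst) A = emeasure (\<mu> \<Otimes>\<^sub>M \<nu>) (A \<times> space \<nu>)"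
      using A S by (subst emeasure_distr) (auto simp: vimage_fst vimage_snd space_pair_measure sp measurable_cong_sets[OF sets_pair_measure_cong[OF S] refl])
    also have "\<dots> = emeasure \<mu> A" using A by (simp add: PP.M2.emeasure_pair_measure_Times PP.M2.emeasure_space_1)
    finally show "emeasure (distr (\<mu> \<Otimes>\<^sub>M \<nu>) borel fst) A = emeasure \<mu> A" .
  qed
  moreover have "distr (\<mu> \<Otimes>\<^sub>M \<nu>) borel snd = \<nu>"
  proof (rule measure_eqI)
    show "sets (distr (\<mu> \<Otimes>\<^sub>M \<nu>) borel snd) = sets \<nu>" using S by simp
    fix A assume "A \<in> sets (distr (\<mu> \<Otimes>\<^sub>M \<nu>) borel snd)"
    then have A: "A \<in> sets \<nu>" using S by simp
    have "emeasure (distr (\<mu> \<Otimes>\<^sub>M \<nu>) borel snd) A = emeasure (\<mu> \<Otimes>\<^sub>M \<nu>) (space \<mu> \<times> A)"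
      using A S by (subst emeasure_distr) (auto simp: vimage_fst vimage_snd space_pair_measure sp measurable_cong_sets[OF sets_pair_measure_cong[OF S] refl])
    also have "\<dots> = emeasure \<nu> A" using A by (simp add: PP.M2.emeasure_pair_measure_Times PP.M1.emeasure_space_1)
    finally show "emeasure (distr (\<mu> \<Otimes>\<^sub>M \<nu>) borel snd) A = emeasure \<nu> A" .
  qed
  ultimately show ?thesis
    unfolding couplings_def using PP.prob_space_axioms sets_pair_measure_cong[OF S] by auto
qed

lemma wasserstein1_nonneg:
  assumes "couplings \<mu> \<nu> \<noteq> {}"
  shows "0 \<le> wasserstein1 \<mu> \<nu>"
  unfolding wasserstein1_def using assms
  by (intro cInf_greatest) (auto intro!: integral_nonneg_AE simp: case_prod_beta)

lemma wasserstein1_le: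
  assumes "\<pi> \<in> couplings \<mu> \<nu>"
  shows "wasserstein1 \<mu> \<nu> \<le> integral\<^sup>L \<pi> (\<lambda>(x,y). dist x y)"
  unfolding wasserstein1_def
  by (rule cInf_lower) (auto intro!: imageI assms bdd_belowI[of _ 0] integral_nonneg_AE simp: case_prod_beta)

lemma wasserstein1_lt:
  assumes "couplings \<mu> \<nu> \<noteq> {}" "wasserstein1 \<mu> \<nu> < c"
  shows "\<exists>\<pi>\<in>couplings \<mu> \<nu>. integral\<^sup>L \<pi> (\<lambda>(x,y). dist x y) < c"
  using assms unfolding wasserstein1_def by (subst (asm) cInf_less_iff) (auto intro!: bdd_belowI[of _ 0] integral_nonneg_AE simp: case_prod_beta)


lemma coupling_mass:
  fixes \<mu> \<nu> :: "(real^'n^'n) measure" and K :: "(real^'n^'n) set"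
  assumes K: "compact K" and \<mu>: "\<mu> \<in> prob_on K" and \<nu>: "\<nu> \<in> prob_on K"
    and \<pi>: "\<pi> \<in> couplings \<nu> \<mu>" and e: "e > 0"
  shows "measure \<mu> (ball x (e/2)) \<le> measure \<nu> (ball x e) + integral\<^sup>L \<pi> (\<lambda>(x,y). dist x y) / (e/2)"
proof -
  have P: "prob_space \<pi>" and Ss: "sets \<pi> = sets (borel \<Otimes>\<^sub>M borel)"
    and d1: "distr \<pi> borel fst = \<nu>" and d2: "distr \<pi> borel snd = \<mu>"
    using \<pi> by (auto simp: couplings_def)
  interpret Pi: prob_space \<pi> by fact
  have sp: "space \<pi> = UNIV" using Ss by (metis sets_eq_imp_space_eq space_pair_measure space_borel UNIV_Times_UNIV)
  have fm: "fst \<in> measurable \<pi> borel" by (subst measurable_cong_sets[OF Ss refl]) (rule measurable_fst)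
  have sm: "snd \<in> measurable \<pi> borel" by (subst measurable_cong_sets[OF Ss refl]) (rule measurable_snd)
  have dm: "(\<lambda>p. dist (fst p) (snd p)) \<in> borel_measurable \<pi>"
    using fm sm by (intro borel_measurable_dist) 
  have m1: "measure \<pi> (fst -` B) = measure \<nu> B" if "B \<in> sets borel" for B
    using measure_distr[OF fm that] d1 sp by simp
  have m2: "measure \<pi> (snd -` B) = measure \<mu> B" if "B \<in> sets borel" for B
    using measure_distr[OF sm that] d2 sp by simp
  have e1: "emeasure \<pi> (fst -` B) = emeasure \<nu> B" if "B \<in> sets borel" for B
    using emeasure_distr[OF fm that] d1 sp by simp
  have e2: "emeasure \<pi> (snd -` B) = emeasure \<mu> B" if "B \<in> sets borel" for B
    using emeasure_distr[OF sm that] d2 sp by simp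
  have nK: "emeasure \<rho> (- K) = 0" if "\<rho> \<in> prob_on K" for \<rho>
  proof -
    have "prob_space \<rho>" "sets \<rho> = sets borel" "emeasure \<rho> K = 1" using that by (auto simp: prob_on_def)
    then interpret R: prob_space \<rho> by simp
    have sr: "space \<rho> = UNIV" using \<open>sets \<rho> = sets borel\<close> by (metis sets_eq_imp_space_eq space_borel)
    have "K \<in> sets \<rho>" using \<open>sets \<rho> = sets borel\<close> borel_closed[OF compact_imp_closed[OF K]] by simp
    have "emeasure \<rho> (- K) = emeasure \<rho> (space \<rho> - K)" using sr by (simp add: Compl_eq_Diff_UNIV)
    also have "\<dots> = 0" using emeasure_compl[OF \<open>K \<in> sets \<rho>\<close>] \<open>emeasure \<rho> K = 1\<close> R.emeasure_space_1 by simp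
    finally show ?thesis .
  qed
  have Kb: "- K \<in> sets borel" by (rule borel_open[OF open_Compl[OF compact_imp_closed[OF K]]])
  have AE1: "AE p in \<pi>. fst p \<in> K"
    by (rule AE_I'[of "fst -` (- K)"]) (use e1[OF Kb] nK[OF \<nu>] measurable_sets[OF fm Kb] in \<open>auto simp: null_sets_def sp\<close>)
  have AE2: "AE p in \<pi>. snd p \<in> K"
    by (rule AE_I'[of "snd -` (- K)"]) (use e2[OF Kb] nK[OF \<mu>] measurable_sets[OF sm Kb] in \<open>auto simp: null_sets_def sp\<close>)
  obtain B where B: "\<And>a. a \<in> K \<Longrightarrow> norm a \<le> B" using K compact_imp_bounded bounded_iff by metis
  have int: "integrable \<pi> (\<lambda>p. dist (fst p) (snd p))"
  proof (rule Pi.integrable_const_bound[where B="B + B"])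
    show "AE p in \<pi>. norm (dist (fst p) (snd p)) \<le> B + B"
      using AE1 AE2 by eventually_elim (auto simp: dist_norm intro!: norm_triangle_le_diff add_mono B dest!: B)
  qed (rule dm)
  have Mk: "measure \<pi> {p \<in> space \<pi>. e/2 \<le> dist (fst p) (snd p)} \<le> integral\<^sup>L \<pi> (\<lambda>p. dist (fst p) (snd p)) / (e/2)"
    by (rule integral_Markov_inequality_measure[OF int, where A="space \<pi>"]) (use e in auto)
  have sub: "snd -` ball x (e/2) \<subseteq> fst -` ball x e \<union> {p \<in> space \<pi>. e/2 \<le> dist (fst p) (snd p)}"
  proof
    fix p :: "(real^'n^'n) \<times> (real^'n^'n)" assume "p \<in> snd -` ball x (e/2)"
    then have "dist x (snd p) < e/2" by auto
    then show "p \<in> fst -` ball x e \<union> {p \<in> space \<pi>. e/2 \<le> dist (fst p) (snd p)}"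
      using dist_triangle[of x "fst p" "snd p"] sp by (auto simp: dist_commute) 
  qed
  have mb: "fst -` ball x e \<in> sets \<pi>" using measurable_sets[OF fm, of "ball x e"] sp by simp
  have ms: "{p \<in> space \<pi>. e/2 \<le> dist (fst p) (snd p)} \<in> sets \<pi>" using dm by measurable
  have "measure \<mu> (ball x (e/2)) = measure \<pi> (snd -` ball x (e/2))" using m2 by simp
  also have "\<dots> \<le> measure \<pi> (fst -` ball x e \<union> {p \<in> space \<pi>. e/2 \<le> dist (fst p) (snd p)})"
    by (rule Pi.finite_measure_mono[OF sub]) (use mb ms in auto)
  also have "\<dots> \<le> measure \<pi> (fst -` ball x e) + measure \<pi> {p \<in> space \<pi>. e/2 \<le> dist (fst p) (snd p)}"
    by (rule measure_Un_le[OF mb ms])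
  also have "\<dots> \<le> measure \<nu> (ball x e) + integral\<^sup>L \<pi> (\<lambda>p. dist (fst p) (snd p)) / (e/2)"
    using m1[of "ball x e"] Mk by simp
  finally show ?thesis by (simp only: case_prod_beta')
qed


lemma prob_on_facts:
  assumes "\<mu> \<in> prob_on K"
  shows "prob_space \<mu>" "sets \<mu> = sets borel"
  using assms by (auto simp: prob_on_def)

lemma part1:
  fixes K :: "(real^'n^'n) set" and \<mu>s :: "nat \<Rightarrow> (real^'n^'n) measure" and \<mu>
  assumes K: "compact K" "K \<subseteq> psd_set" and \<mu>s: "\<forall>n. \<mu>s n \<in> mono_prob_on K" and \<mu>: "\<mu> \<in> prob_on K"
    and lim: "(\<lambda>n. wasserstein1 (\<mu>s n) \<mu>) \<longlonglongrightarrow> 0"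
  shows "\<mu> \<in> mono_prob_on K"
proof -
  have \<mu>sK: "\<mu>s n \<in> prob_on K" for n using \<mu>s by (auto simp: mono_prob_on_def)
  have near: "\<exists>N. \<forall>n\<ge>N. 0 < emeasure (\<mu>s n) (ball x e)" if x: "x \<in> msupport \<mu>" and e: "e > 0" for x e
  proof -
    interpret M: prob_space \<mu> using prob_on_facts[OF \<mu>] by simp
    define m where "m = measure \<mu> (ball x (e/2))"
    have "0 < emeasure \<mu> (ball x (e/2))" using x e by (auto simp: msupport_def)
    then have m: "m > 0" unfolding m_def by (simp add: M.emeasure_eq_measure)
    have "eventually (\<lambda>n. wasserstein1 (\<mu>s n) \<mu> < m * e / 4) sequentially"
      using lim m e by (intro order_tendstoD(2)) auto
    then obtain N where N: "\<And>n. n \<ge> N \<Longrightarrow> wasserstein1 (\<mu>s n) \<mu> < m * e / 4"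
      by (auto simp: eventually_sequentially)
    show ?thesis
    proof (intro exI[of _ N] allI impI)
      fix n assume "N \<le> n"
      interpret Mn: prob_space "\<mu>s n" using prob_on_facts[OF \<mu>sK] by simp
      have ne: "couplings (\<mu>s n) \<mu> \<noteq> {}"
        using coupling_prod[OF prob_on_facts(1)[OF \<mu>sK] prob_on_facts(1)[OF \<mu>] prob_on_facts(2)[OF \<mu>sK] prob_on_facts(2)[OF \<mu>]]
        by auto
      obtain \<pi> where \<pi>: "\<pi> \<in> couplings (\<mu>s n) \<mu>" "integral\<^sup>L \<pi> (\<lambda>(x,y). dist x y) < m * e / 4"
        using wasserstein1_lt[OF ne N[OF \<open>N \<le> n\<close>]] by blast
      have "m \<le> measure (\<mu>s n) (ball x e) + integral\<^sup>L \<pi> (\<lambda>(x,y). dist x y) / (e/2)"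
        unfolding m_def by (rule coupling_mass[OF K(1) \<mu> \<mu>sK \<pi>(1) e])
      also have "integral\<^sup>L \<pi> (\<lambda>(x,y). dist x y) / (e/2) < m / 2"
        using \<pi>(2) e by (simp add: field_simps)
      finally have "0 < measure (\<mu>s n) (ball x e)" using m by simp
      then show "0 < emeasure (\<mu>s n) (ball x e)" by (simp add: Mn.emeasure_eq_measure)
    qed
  qed
  have "totally_ordered (msupport \<mu>)"
    unfolding totally_ordered_def
  proof (intro ballI comparable_approx)
    fix x y :: "real^'n^'n" and e :: real
    assume x: "x \<in> msupport \<mu>" and y: "y \<in> msupport \<mu>" and e: "e > 0"
    obtain N1 where N1: "\<And>n. n \<ge> N1 \<Longrightarrow> 0 < emeasure (\<mu>s n) (ball x e)" using near[OF x e] by blast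
    obtain N2 where N2: "\<And>n. n \<ge> N2 \<Longrightarrow> 0 < emeasure (\<mu>s n) (ball y e)" using near[OF y e] by blast
    define n where "n = max N1 N2"
    have "\<mu>s n \<in> monotone_measures" using \<mu>s by (simp add: mono_prob_on_def)
    then obtain q where q0: "q \<in> borel_measurable lborel" and q: "\<forall>u\<in>{0..<1}. \<forall>v\<in>{0..<1}. u \<le> v \<longrightarrow> loewner_le (q u) (q v)"
      "\<mu>s n = distr unif01 borel q"
      unfolding monotone_measures_def by blast
    have q1: "q \<in> borel_measurable borel" using q0 by (simp add: measurable_lborel1)
    obtain u where u: "u \<in> {0..<1}" "q u \<in> ball x e"
      using distr_unif01_pos[OF q1, of "ball x e"] N1[of n] q(2) by (auto simp: n_def)
    obtain v where v: "v \<in> {0..<1}" "q v \<in> ball y e"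
      using distr_unif01_pos[OF q1, of "ball y e"] N2[of n] q(2) by (auto simp: n_def)
    have "loewner_le (q u) (q v) \<or> loewner_le (q v) (q u)"
      using q(1) u(1) v(1) by (meson linear)
    then show "\<exists>a b. dist a x < e \<and> dist b y < e \<and> (loewner_le a b \<or> loewner_le b a)"
      using u(2) v(2) by (intro exI[of _ "q u"] exI[of _ "q v"]) (auto simp: dist_commute)
  qed
  then show ?thesis using total_support_mono[OF K \<mu>] \<mu> by (auto simp: mono_prob_on_def)
qed


lemma diag_subseq:
  fixes f :: "nat \<Rightarrow> 'c \<Rightarrow> 'a::metric_space"
  assumes C: "countable C" and B: "compact B" and fB: "\<And>n c. c \<in> C \<Longrightarrow> f n c \<in> B"
  shows "\<exists>s. strict_mono s \<and> (\<forall>c\<in>C. convergent (\<lambda>k. f (s k) c))"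
proof (cases "C = {}")
  case True
  then show ?thesis by (intro exI[of _ id]) (auto simp: strict_mono_def)
next
  case False
  define r where "r = from_nat_into C"
  have rC: "range r = C" unfolding r_def using C False by simp
  let ?P = "\<lambda>n. \<lambda>s. convergent (\<lambda>k. f (s k) (r n))"
  interpret nat: subseqs ?P
  proof (unfold convergent_def, unfold subseqs_def, auto)
    fix n :: nat and s :: "nat \<Rightarrow> nat" assume s: "strict_mono s"
    have "\<And>k. f (s k) (r n) \<in> B" using fB rC by auto
    then have "\<exists>l s'. strict_mono s' \<and> ((\<lambda>k. f (s k) (r n)) \<circ> s') \<longlonglongrightarrow> l"
      using B compact_imp_seq_compact seq_compactE by metis
    thus "\<exists>s'. strict_mono (s'::nat\<Rightarrow>nat) \<and> (\<exists>l. (\<lambda>k. f (s (s' k)) (r n)) \<longlonglongrightarrow> l)"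
      by (auto simp: comp_def)
  qed
  define d where "d = nat.diagseq"
  have subseq: "strict_mono d"
    unfolding d_def using nat.subseq_diagseq by auto
  have cnv: "?P n d" for n
  proof -
    have Pn_seqseq: "?P n (nat.seqseq (Suc n))"
      by (rule nat.seqseq_holds)
    have 1: "(\<lambda>k. f ((nat.seqseq (Suc n) \<circ> (\<lambda>k. nat.fold_reduce (Suc n) k
      (Suc n + k))) k) (r n)) = (\<lambda>k. f (nat.seqseq (Suc n) k) (r n)) \<circ>
      (\<lambda>k. nat.fold_reduce (Suc n) k (Suc n + k))"
      by auto
    have 2: "?P n (d \<circ> ((+) (Suc n)))"
      unfolding d_def nat.diagseq_seqseq 1
      by (intro convergent_subseq_convergent Pn_seqseq nat.subseq_diagonal_rest)
    then obtain L where 3: "(\<lambda>na. f (d (na + Suc n)) (r n)) \<longlonglongrightarrow> L"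
      by (auto simp: add.commute dest: convergentD)
    then have "(\<lambda>k. f (d k) (r n)) \<longlonglongrightarrow> L"
      by (rule LIMSEQ_offset)
    then show ?thesis
      by (auto simp: convergent_def)
  qed
  show ?thesis using subseq cnv rC by (intro exI[of _ d]) auto
qed


lemma tendsto_mtr: "(f \<longlongrightarrow> l) F \<Longrightarrow> ((\<lambda>x. mtr (f x)) \<longlongrightarrow> mtr l) F"
  unfolding mtr_def by (intro tendsto_intros)

lemma helly_loewner:
  fixes q :: "nat \<Rightarrow> real \<Rightarrow> real^'n^'n"
  assumes mono: "\<And>n u v. u \<in> {0..<1} \<Longrightarrow> v \<in> {0..<1} \<Longrightarrow> u \<le> v \<Longrightarrow> loewner_le (q n u) (q n v)"
    and psd: "\<And>n u. u \<in> {0..<1} \<Longrightarrow> psd (q n u)"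
    and bd: "\<And>n u. u \<in> {0..<1} \<Longrightarrow> mtr (q n u) \<le> M"
  shows "\<exists>s. strict_mono s \<and> (\<forall>u\<in>{0..<1}. convergent (\<lambda>k. q (s k) u))"
proof -
  define c where "c = real CARD('n)"
  have c: "c > 0" unfolding c_def by simp
  have inB: "q n u \<in> cball 0 (c * M)" if "u \<in> {0..<1}" for n u
  proof -
    have "norm (q n u) \<le> c * mtr (q n u)" unfolding c_def by (rule psd_norm_le[OF psd[OF that]])
    also have "\<dots> \<le> c * M" using bd[OF that] c by simp
    finally show ?thesis by simp
  qed
  define D where "D = \<rat> \<inter> {0..<1::real}"
  have D: "countable D" unfolding D_def by (simp add: countable_rat)
  have D01: "r \<in> D \<Longrightarrow> r \<in> {0..<1}" for r by (simp add: D_def)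
  obtain s1 where s1: "strict_mono s1" "\<forall>r\<in>D. convergent (\<lambda>k. q (s1 k) r)"
    using diag_subseq[OF D compact_cball, of q 0 "c * M"] inB D01 by blast
  define G where "G r = lim (\<lambda>k. q (s1 k) r)" for r
  have Gt: "(\<lambda>k. q (s1 k) r) \<longlonglongrightarrow> G r" if "r \<in> D" for r
    using s1(2) that unfolding G_def by (simp add: convergent_LIMSEQ_iff)
  have mG: "(\<lambda>k. mtr (q (s1 k) r)) \<longlonglongrightarrow> mtr (G r)" if "r \<in> D" for r
    by (rule tendsto_mtr[OF Gt[OF that]])
  have mG_mono: "mtr (G r) \<le> mtr (G r')" if "r \<in> D" "r' \<in> D" "r \<le> r'" for r r'
    by (rule LIMSEQ_le[OF mG[OF that(1)] mG[OF that(2)]]) (use mono D01 that loewner_mtr in blast)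
  have mG_bd: "mtr (G r) \<le> M" if "r \<in> D" for r
    by (rule LIMSEQ_le_const2[OF mG[OF that]]) (use bd D01 that in blast)
  define \<Phi> where "\<Phi> u = Sup ((\<lambda>r. mtr (G r)) ` {r\<in>D. r \<le> u})" for u
  have ne: "{r\<in>D. r \<le> u} \<noteq> {}" if "0 \<le> u" for u
    using that by (auto simp: D_def intro!: exI[of _ 0])
  have bdd: "bdd_above ((\<lambda>r. mtr (G r)) ` {r\<in>D. r \<le> u})" for u
    using mG_bd by (auto intro!: bdd_aboveI[of _ M])
  have \<Phi>_mono: "mono_on {0<..<1} \<Phi>"
    unfolding mono_on_def \<Phi>_def
  proof (intro allI impI cSup_subset_mono bdd)
    fix r s :: real assume "r \<in> {0<..<1} \<and> s \<in> {0<..<1} \<and> r \<le> s"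
    then show "(\<lambda>r. mtr (G r)) ` {r'\<in>D. r' \<le> r} \<noteq> {}" "(\<lambda>r. mtr (G r)) ` {r'\<in>D. r' \<le> r} \<subseteq> (\<lambda>r. mtr (G r)) ` {r'\<in>D. r' \<le> s}"
      using ne[of r] by auto
  qed
  have \<Phi>_at: "\<Phi> r = mtr (G r)" if "r \<in> D" for r
    unfolding \<Phi>_def using that mG_mono by (intro cSup_eq_maximum) auto
  define J where "J = {a\<in>{0<..<1}. \<not> continuous (at a within {0<..<1}) \<Phi>}"
  have J: "countable J" unfolding J_def by (rule mono_on_ctble_discont[OF \<Phi>_mono])
  define C2 where "C2 = insert 0 J"
  have C2: "countable C2" using J by (simp add: C2_def)
  have C201: "u \<in> C2 \<Longrightarrow> u \<in> {0..<1}" for u by (auto simp: C2_def J_def)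
  obtain s2 where s2: "strict_mono s2" "\<forall>u\<in>C2. convergent (\<lambda>k. q (s1 (s2 k)) u)"
    using diag_subseq[OF C2 compact_cball, of "\<lambda>k. q (s1 k)" 0 "c * M"] inB C201 by blast
  define s where "s = s1 \<circ> s2"
  have s: "strict_mono s" unfolding s_def using s1(1) s2(1) by (rule strict_mono_o)
  have convD: "(\<lambda>k. q (s k) r) \<longlonglongrightarrow> G r" if "r \<in> D" for r
    using LIMSEQ_subseq_LIMSEQ[OF Gt[OF that] s2(1)] by (simp add: s_def comp_def)
  have mD: "(\<lambda>k. mtr (q (s k) r)) \<longlonglongrightarrow> mtr (G r)" if "r \<in> D" for r
    by (rule tendsto_mtr[OF convD[OF that]])
  have "convergent (\<lambda>k. q (s k) u)" if u: "u \<in> {0..<1}" for u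
  proof (cases "u \<in> C2")
    case True
    then show ?thesis using s2(2) by (simp add: s_def comp_def)
  next
    case False
    then have u01: "u \<in> {0<..<1}" using u by (auto simp: C2_def)
    have cont: "continuous (at u within {0<..<1}) \<Phi>" using False u01 by (auto simp: C2_def J_def)
    have "Cauchy (\<lambda>k. q (s k) u)"
    proof (rule metric_CauchyI)
      fix \<epsilon> :: real assume \<epsilon>: "\<epsilon> > 0"
      define \<eta> where "\<eta> = \<epsilon> / (4 * c + 1)"
      have \<eta>: "\<eta> > 0" unfolding \<eta>_def using \<epsilon> c by simp
      have "4 * c * \<eta> + \<eta> = (4 * c + 1) * \<eta>" by (simp add: algebra_simps)
      also have "\<dots> = \<epsilon>" unfolding \<eta>_def using c by (simp add: nonzero_mult_div_cancel_left)
      finally have \<epsilon>\<eta>: "4 * c * \<eta> + \<eta> = \<epsilon>" .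
      obtain \<delta> where \<delta>: "\<delta> > 0" "\<And>v. v \<in> {0<..<1} \<Longrightarrow> dist v u < \<delta> \<Longrightarrow> dist (\<Phi> v) (\<Phi> u) < \<eta>"
        using cont \<eta> unfolding continuous_within_eps_delta by blast
      obtain r where r: "r \<in> \<rat>" "max 0 (u - \<delta>) < r" "r < u"
        using Rats_dense_in_real[of "max 0 (u - \<delta>)" u] u01 \<delta> by auto
      obtain r' where r': "r' \<in> \<rat>" "u < r'" "r' < min 1 (u + \<delta>)"
        using Rats_dense_in_real[of u "min 1 (u + \<delta>)"] u01 \<delta> by auto
      have rD: "r \<in> D" "r' \<in> D" using r r' u01 by (auto simp: D_def)
      have "dist (\<Phi> r) (\<Phi> u) < \<eta>" using \<delta>(2)[of r] r u01 by (auto simp: dist_real_def)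
      moreover have "dist (\<Phi> r') (\<Phi> u) < \<eta>" using \<delta>(2)[of r'] r' u01 by (auto simp: dist_real_def)
      ultimately have gap: "mtr (G r') - mtr (G r) < 2 * \<eta>"
        using \<Phi>_at[OF rD(1)] \<Phi>_at[OF rD(2)] by (simp add: dist_real_def)
      have "eventually (\<lambda>k. mtr (q (s k) r') - mtr (q (s k) r) < 2 * \<eta>) sequentially"
        by (rule order_tendstoD(2)[OF tendsto_diff[OF mD[OF rD(2)] mD[OF rD(1)]] gap])
      then obtain N2 where N2: "\<And>k. k \<ge> N2 \<Longrightarrow> mtr (q (s k) r') - mtr (q (s k) r) < 2 * \<eta>"
        by (auto simp: eventually_sequentially)
      obtain N1 where N1: "\<And>m n. m \<ge> N1 \<Longrightarrow> n \<ge> N1 \<Longrightarrow> dist (q (s m) r) (q (s n) r) < \<eta>"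
        using metric_CauchyD[OF LIMSEQ_imp_Cauchy[OF convD[OF rD(1)]] \<eta>] by blast
      have close: "dist (q (s k) u) (q (s k) r) \<le> 2 * c * \<eta>" if "k \<ge> N2" for k
      proof -
        have l1: "loewner_le (q (s k) r) (q (s k) u)" using mono[of r u] r u01 D01[OF rD(1)] by auto
        have l2: "loewner_le (q (s k) u) (q (s k) r')" using mono[of u r' ] r' u01 D01[OF rD(2)] by auto
        have "dist (q (s k) u) (q (s k) r) = norm (q (s k) u - q (s k) r)" by (simp add: dist_norm)
        also have "\<dots> \<le> c * (mtr (q (s k) u) - mtr (q (s k) r))" unfolding c_def by (rule loewner_norm[OF l1])
        also have "\<dots> \<le> c * (2 * \<eta>)"
          using loewner_mtr[OF l2] N2[OF that] c by (intro mult_left_mono) auto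
        finally show ?thesis by simp
      qed
      show "\<exists>N. \<forall>m\<ge>N. \<forall>n\<ge>N. dist (q (s m) u) (q (s n) u) < \<epsilon>"
      proof (intro exI[of _ "max N1 N2"] allI impI)
        fix m n assume m: "max N1 N2 \<le> m" and n: "max N1 N2 \<le> n"
        have "dist (q (s m) u) (q (s n) u) \<le> dist (q (s m) u) (q (s m) r) + dist (q (s m) r) (q (s n) r) + dist (q (s n) r) (q (s n) u)"
          using dist_triangle[of "q (s m) u" "q (s n) u" "q (s m) r"] dist_triangle[of "q (s m) r" "q (s n) u" "q (s n) r"]
          by linarith
        also have "\<dots> < 2 * c * \<eta> + \<eta> + 2 * c * \<eta>"
          using close[of m] close[of n] N1[of m n] m n by (simp add: dist_commute algebra_simps)
        also have "\<dots> = \<epsilon>" using \<epsilon>\<eta> by (simp add: algebra_simps)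
        finally show "dist (q (s m) u) (q (s n) u) < \<epsilon>" .
      qed
    qed
    then show ?thesis by (simp add: Cauchy_convergent_iff)
  qed
  then show ?thesis using s by blast
qed


lemma part2:
  fixes K :: "(real^'n^'n) set" and \<mu>s :: "nat \<Rightarrow> (real^'n^'n) measure"
  assumes K: "compact K" "K \<subseteq> psd_set" and \<mu>s: "\<forall>n. \<mu>s n \<in> mono_prob_on K"
  shows "\<exists>r \<mu>. strict_mono r \<and> \<mu> \<in> mono_prob_on K \<and> (\<lambda>n. wasserstein1 (\<mu>s (r n)) \<mu>) \<longlonglongrightarrow> 0"
proof -
  interpret U: prob_space unif01 by (rule unif01_prob)
  have "\<forall>n. \<exists>q. q \<in> borel_measurable lborel \<and> (\<forall>u\<in>{0..<1}. q u \<in> psd_set) \<and>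
      (\<forall>u\<in>{0..<1}. \<forall>v\<in>{0..<1}. u \<le> v \<longrightarrow> loewner_le (q u) (q v)) \<and> \<mu>s n = distr unif01 borel q"
    using \<mu>s unfolding mono_prob_on_def monotone_measures_def by blast
  then obtain q where q: "\<And>n. q n \<in> borel_measurable lborel" "\<And>n. \<forall>u\<in>{0..<1}. q n u \<in> psd_set"
    "\<And>n. \<forall>u\<in>{0..<1}. \<forall>v\<in>{0..<1}. u \<le> v \<longrightarrow> loewner_le (q n u) (q n v)" "\<And>n. \<mu>s n = distr unif01 borel (q n)"
    by metis
  have qm: "q n \<in> borel_measurable borel" for n using q(1) by (simp add: measurable_lborel1)
  have qmU: "q n \<in> borel_measurable unif01" for n using qm by (simp add: measurable_unif01)
  have Kc: "closed K" using K(1) by (rule compact_imp_closed)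
  have Kb: "K \<in> sets borel" using Kc by simp
  have \<mu>sK: "emeasure (\<mu>s n) K = 1" for n using \<mu>s by (auto simp: mono_prob_on_def prob_on_def)
  have eK: "emeasure unif01 (q n -` K) = 1" for n
    using \<mu>sK[of n] emeasure_distr[OF qmU Kb] q(4)[of n] by simp
  have AEK: "AE u in unif01. q n u \<in> K" for n
  proof -
    have m: "q n -` K \<in> sets unif01" using measurable_sets_borel[OF qm Kb] by simp
    have "measure unif01 (q n -` K) = 1" using eK by (simp add: U.emeasure_eq_measure)
    then have "AE u in unif01. u \<in> q n -` K" using U.AE_in_set_eq_1[OF m] by blast
    then show ?thesis by simp
  qed
  have AE01: "AE u in unif01. u \<in> {0..<1}"
  proof -
    have "emeasure unif01 {0..<1} = 1" by (subst emeasure_unif01) auto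
    then show ?thesis by (subst U.AE_in_set_eq_1) (auto simp: U.emeasure_eq_measure)
  qed
  have "bounded (mtr ` K)" by (rule compact_imp_bounded[OF compact_continuous_image[OF continuous_mtr K(1)]])
  then obtain MK where MKa: "\<forall>y\<in>mtr ` K. \<bar>y\<bar> \<le> MK" by (auto simp: bounded_real)
  have MK: "\<And>x. x \<in> K \<Longrightarrow> mtr x \<le> MK" using MKa by fastforce
  have psd: "psd (q n u)" if "u \<in> {0..<1}" for n u using q(2) that by (auto simp: psd_set_def)
  have bd: "mtr (q n u) \<le> MK" if u: "u \<in> {0..<1}" for n u
  proof -
    have "\<exists>v\<in>{u..<1}. q n v \<in> K"
    proof (rule ccontr)
      assume "\<not> ?thesis"
      then have sub: "q n -` K \<inter> {0..<1} \<subseteq> {0..<u}" by auto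
      have "emeasure lborel (q n -` K \<inter> {0..<1}) = 1"
        using eK[of n] measurable_sets_borel[OF qm Kb] by (subst (asm) emeasure_unif01) auto
      moreover have "emeasure lborel (q n -` K \<inter> {0..<1}) \<le> emeasure lborel {0..<u}"
        by (rule emeasure_mono[OF sub]) simp
      ultimately show False using u by (simp add: ennreal_le_1)
    qed
    then obtain v where v: "v \<in> {u..<1}" "q n v \<in> K" by blast
    have "mtr (q n u) \<le> mtr (q n v)" using q(3)[of n] u v(1) by (auto intro: loewner_mtr)
    also have "\<dots> \<le> MK" by (rule MK[OF v(2)])
    finally show ?thesis .
  qed
  obtain s where s: "strict_mono s" "\<forall>u\<in>{0..<1}. convergent (\<lambda>k. q (s k) u)"
    using helly_loewner[of q MK] q(3) psd bd by blast
  define ql where "ql u = (if u \<in> {0..<1} then lim (\<lambda>k. q (s k) u) else 0)" for u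
  have qt: "(\<lambda>k. q (s k) u) \<longlonglongrightarrow> ql u" if "u \<in> {0..<1}" for u
    using s(2) that unfolding ql_def by (simp add: convergent_LIMSEQ_iff)
  have qlm: "ql \<in> borel_measurable borel"
  proof (rule borel_measurable_LIMSEQ_metric)
    fix k show "(\<lambda>u. if u \<in> {0..<1} then q (s k) u else 0) \<in> borel_measurable borel"
      by (rule measurable_If_set) (auto simp: qm)
  next
    fix u :: real
    show "(\<lambda>k. if u \<in> {0..<1} then q (s k) u else 0) \<longlonglongrightarrow> ql u"
      using qt[of u] by (cases "u \<in> {0..<1}") (auto simp: ql_def)
  qed
  have qlU: "ql \<in> borel_measurable unif01" using qlm by (simp add: measurable_unif01)
  have ql_psd: "ql u \<in> psd_set" if "u \<in> {0..<1}" for u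
    by (rule Lim_in_closed_set[OF psd_set_closed _ _ qt[OF that]]) (use q(2) that in auto)
  have ql_mono: "loewner_le (ql u) (ql v)" if "u \<in> {0..<1}" "v \<in> {0..<1}" "u \<le> v" for u v
  proof -
    have "(ql u, ql v) \<in> {p. loewner_le (fst p) (snd p)}"
      by (rule Lim_in_closed_set[OF closed_loewner _ _ tendsto_Pair[OF qt[OF that(1)] qt[OF that(2)]]])
         (use q(3) that in auto)
    then show ?thesis by simp
  qed
  define c where "c = real CARD('n)"
  have nb: "norm (q n u) \<le> c * MK" if "u \<in> {0..<1}" for n u
  proof -
    have "norm (q n u) \<le> c * mtr (q n u)" unfolding c_def by (rule psd_norm_le[OF psd[OF that]])
    also have "\<dots> \<le> c * MK" using bd[OF that] by (intro mult_left_mono) (auto simp: c_def)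
    finally show ?thesis .
  qed
  have nbl: "norm (ql u) \<le> c * MK" if "u \<in> {0..<1}" for u
  proof -
    have "ql u \<in> cball 0 (c * MK)"
      by (rule Lim_in_closed_set[OF closed_cball _ _ qt[OF that]]) (use nb that in auto)
    then show ?thesis by simp
  qed
  have AEqlK: "AE u in unif01. ql u \<in> K"
  proof -
    have "AE u in unif01. \<forall>n. q n u \<in> K" using AEK by (simp add: AE_all_countable)
    with AE01 show ?thesis
    proof eventually_elim
      case (elim u)
      then show ?case by (intro Lim_in_closed_set[OF Kc _ _ qt]) auto
    qed
  qed
  define \<mu> where "\<mu> = distr unif01 borel ql"
  have \<mu>P: "\<mu> \<in> prob_on K"
  proof -
    have "prob_space \<mu>" unfolding \<mu>_def by (rule U.prob_space_distr[OF qlU])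
    moreover have "sets \<mu> = sets borel" by (simp add: \<mu>_def)
    moreover have "emeasure \<mu> K = 1"
    proof -
      have m: "ql -` K \<in> sets unif01" using measurable_sets_borel[OF qlm Kb] by simp
      have "measure unif01 (ql -` K) = 1" using AEqlK U.AE_in_set_eq_1[OF m] by simp
      then have "emeasure unif01 (ql -` K) = 1" by (simp add: U.emeasure_eq_measure)
      then show ?thesis unfolding \<mu>_def using emeasure_distr[OF qlU Kb] by simp
    qed
    ultimately show ?thesis by (simp add: prob_on_def)
  qed
  have \<mu>M: "\<mu> \<in> monotone_measures"
    unfolding monotone_measures_def \<mu>_def
    using qlm ql_psd ql_mono by (auto simp: measurable_lborel1 intro!: exI[of _ ql])
  define pr where "pr k = (\<lambda>u. (q (s k) u, ql u))" for k
  have prm: "pr k \<in> measurable unif01 (borel \<Otimes>\<^sub>M borel)" for k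
    unfolding pr_def by (intro measurable_Pair qmU qlU)
  define \<pi> where "\<pi> k = distr unif01 (borel \<Otimes>\<^sub>M borel) (pr k)" for k
  have \<pi>c: "\<pi> k \<in> couplings (\<mu>s (s k)) \<mu>" for k
  proof -
    have "prob_space (\<pi> k)" unfolding \<pi>_def by (rule U.prob_space_distr[OF prm])
    moreover have "distr (\<pi> k) borel fst = \<mu>s (s k)"
      unfolding \<pi>_def q(4) by (subst distr_distr[OF measurable_fst prm]) (simp add: pr_def comp_def)
    moreover have "distr (\<pi> k) borel snd = \<mu>"
      unfolding \<pi>_def \<mu>_def by (subst distr_distr[OF measurable_snd prm]) (simp add: pr_def comp_def)
    ultimately show ?thesis by (simp add: couplings_def \<pi>_def)
  qed
  have dm: "(\<lambda>p. dist (fst p) (snd p)) \<in> borel_measurable (borel \<Otimes>\<^sub>M borel :: ((real^'n^'n) \<times> (real^'n^'n)) measure)"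
    by (rule borel_measurable_dist[OF measurable_fst measurable_snd])
  have int_eq: "integral\<^sup>L (\<pi> k) (\<lambda>(x,y). dist x y) = integral\<^sup>L unif01 (\<lambda>u. dist (q (s k) u) (ql u))" for k
    unfolding \<pi>_def case_prod_beta' by (subst integral_distr[OF prm dm]) (simp add: pr_def)
  have lim0: "(\<lambda>k. integral\<^sup>L unif01 (\<lambda>u. dist (q (s k) u) (ql u))) \<longlonglongrightarrow> integral\<^sup>L unif01 (\<lambda>u. 0::real)"
  proof (rule integral_dominated_convergence[where w="\<lambda>u. 2 * (c * MK)"])
    show "(\<lambda>u. 0::real) \<in> borel_measurable unif01" by simp
    show "(\<lambda>u. dist (q (s k) u) (ql u)) \<in> borel_measurable unif01" for k
      by (intro borel_measurable_dist qmU qlU)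
    show "integrable unif01 (\<lambda>u. 2 * (c * MK))" by simp
    show "AE u in unif01. (\<lambda>k. dist (q (s k) u) (ql u)) \<longlonglongrightarrow> 0"
      using AE01
    proof eventually_elim
      case (elim u)
      show ?case by (rule tendsto_dist_iff[THEN iffD1, OF qt[OF elim]])
    qed
    show "AE u in unif01. norm (dist (q (s k) u) (ql u)) \<le> 2 * (c * MK)" for k
      using AE01
    proof eventually_elim
      case (elim u)
      have "dist (q (s k) u) (ql u) \<le> norm (q (s k) u) + norm (ql u)"
        by (simp add: dist_norm norm_triangle_ineq4)
      then show ?case using nb[OF elim, of "s k"] nbl[OF elim] by simp
    qed
  qed
  have "(\<lambda>k. wasserstein1 (\<mu>s (s k)) \<mu>) \<longlonglongrightarrow> 0"
  proof (rule tendsto_sandwich[OF _ _ tendsto_const lim0[simplified]])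
    show "\<forall>\<^sub>F k in sequentially. 0 \<le> wasserstein1 (\<mu>s (s k)) \<mu>"
      using \<pi>c by (intro always_eventually allI wasserstein1_nonneg) blast
    show "\<forall>\<^sub>F k in sequentially. wasserstein1 (\<mu>s (s k)) \<mu> \<le> integral\<^sup>L unif01 (\<lambda>u. dist (q (s k) u) (ql u))"
      using wasserstein1_le[OF \<pi>c] int_eq by (intro always_eventually allI) metis
  qed
  then show ?thesis using s(1) \<mu>P \<mu>M by (auto simp: mono_prob_on_def)
qed


theorem proposition5p9:
  fixes K :: "(real^'n^'n) set"
  assumes "compact K" and "K \<subseteq> psd_set"
  shows "(\<forall>(\<mu>s :: nat \<Rightarrow> (real^'n^'n) measure) \<mu>.
            (\<forall>n. \<mu>s n \<in> mono_prob_on K) \<and> \<mu> \<in> prob_on K \<and>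
            (\<lambda>n. wasserstein1 (\<mu>s n) \<mu>) \<longlonglongrightarrow> 0
            \<longrightarrow> \<mu> \<in> mono_prob_on K)
       \<and> (\<forall>\<mu>s :: nat \<Rightarrow> (real^'n^'n) measure. (\<forall>n. \<mu>s n \<in> mono_prob_on K) \<longrightarrow>
            (\<exists>r \<mu>. strict_mono r \<and> \<mu> \<in> mono_prob_on K \<and>
               (\<lambda>n. wasserstein1 (\<mu>s (r n)) \<mu>) \<longlonglongrightarrow> 0))
       \<and> (\<forall>\<mu>\<in>prob_on K. totally_ordered (msupport \<mu>) \<longleftrightarrow> \<mu> \<in> mono_prob_on K)"
proof -
  have A: "\<mu> \<in> mono_prob_on K"
    if "(\<forall>n. \<mu>s n \<in> mono_prob_on K) \<and> \<mu> \<in> prob_on K \<and> (\<lambda>n. wasserstein1 (\<mu>s n) \<mu>) \<longlonglongrightarrow> 0"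
    for \<mu>s :: "nat \<Rightarrow> (real^'n^'n) measure" and \<mu>
    using that part1[OF assms, of \<mu>s \<mu>] by blast
  have B: "\<exists>r \<mu>. strict_mono r \<and> \<mu> \<in> mono_prob_on K \<and> (\<lambda>n. wasserstein1 (\<mu>s (r n)) \<mu>) \<longlonglongrightarrow> 0"
    if "\<forall>n. \<mu>s n \<in> mono_prob_on K" for \<mu>s :: "nat \<Rightarrow> (real^'n^'n) measure"
    by (rule part2[OF assms that])
  have C: "totally_ordered (msupport \<mu>) \<longleftrightarrow> \<mu> \<in> mono_prob_on K" if \<mu>: "\<mu> \<in> prob_on K" for \<mu>
  proof
    assume "totally_ordered (msupport \<mu>)"
    then show "\<mu> \<in> mono_prob_on K" using total_support_mono[OF assms \<mu>] \<mu> by (simp add: mono_prob_on_def)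
  next
    assume "\<mu> \<in> mono_prob_on K"
    then have "\<mu> \<in> monotone_measures" by (simp add: mono_prob_on_def)
    then obtain q where q0: "q \<in> borel_measurable lborel"
      and q: "\<forall>u\<in>{0..<1}. \<forall>v\<in>{0..<1}. u \<le> v \<longrightarrow> loewner_le (q u) (q v)" "\<mu> = distr unif01 borel q"
      unfolding monotone_measures_def by blast
    have q1: "q \<in> borel_measurable borel" using q0 by (simp add: measurable_lborel1)
    show "totally_ordered (msupport \<mu>)" unfolding q(2) by (rule mono_support_total[OF q1 q(1)])
  qed
  show ?thesis using A B C by blast
qed

end
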